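(* Assume $x(0)=x'(0)=0$, $y_1(t)\to0$ and $x(t)\to0$ as $t\to\infty$. Let $L_2(t,s)=\omega^2\cos(\omega(t-s))-\omega\sin(\omega(t-s))$. Then $x'(t)\to0$ as $t\to\infty$ if and only if \[ \lim_{t\to\infty}\int_0^tE(t,s)L_2(t,s)y_1(s)\,ds=0. \]
   Context: Standing assumptions: $\omega>0$ is a constant; $p\in C^1([0,\infty))$ with $p(t)>0$ and $p'(t)<0$ for all $t\ge0$, $\int_0^\infty p(t)\,dt=\infty$ and $\int_0^\infty p(t)^2\,dt<\infty$; $f\in L^1_{\mathrm{loc}}([0,\infty))$. $x$ denotes the solution of $x''(t)+p(t)x'(t)+\omega^2x(t)=f(t)$, $t\ge0$. Notation: $E(t,s)=\exp(-\frac12\int_s^tp(\tau)\,d\tau)$ for $0\le s\le t$; $y_1(t)=\int_0^te^{-\omega^2(t-s)}f(s)\,ds$. *)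

theory Defs
  imports "HOL-Analysis.Analysis"
begin

definition E :: "(real \<Rightarrow> real) \<Rightarrow> real \<Rightarrow> real \<Rightarrow> real" where
  "E p t s = exp (- (1/2) * (LINT \<tau>:{s..t}|lborel. p \<tau>))"

definition y1 :: "real \<Rightarrow> (real \<Rightarrow> real) \<Rightarrow> real \<Rightarrow> real" where
  "y1 \<omega> f t = (LINT s:{0..t}|lborel. exp (- (\<omega>^2) * (t - s)) * f s)"

definition L2 :: "real \<Rightarrow> real \<Rightarrow> real \<Rightarrow> real" where
  "L2 \<omega> t s = \<omega>^2 * cos (\<omega> * (t - s)) - \<omega> * sin (\<omega> * (t - s))"

end

theory Submission
  imports Defs
begin


lemma set_integrable_cont_mult:
  fixes u g :: "real \<Rightarrow> real"
  assumes u: "continuous_on {a..b} u" and g: "set_integrable lborel {a..b} g"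
  shows "set_integrable lborel {a..b} (\<lambda>s. u s * g s)"
proof -
  obtain M where M: "\<And>s. s \<in> {a..b} \<Longrightarrow> norm (u s) \<le> M"
    using compact_continuous_image[OF u compact_Icc] compact_imp_bounded bounded_iff by (metis image_eqI)
  have gm: "(\<lambda>x. indicator {a..b} x *\<^sub>R g x) \<in> borel_measurable lborel"
    using g unfolding set_integrable_def by (rule borel_measurable_integrable)
  have um: "(\<lambda>x. indicator {a..b} x *\<^sub>R u x) \<in> borel_measurable lborel"
    using borel_measurable_continuous_on_indicator[OF _ u] by simp
  have meas: "set_borel_measurable lborel {a..b} (\<lambda>s. u s * g s)"
    unfolding set_borel_measurable_def
  proof -
    have "(\<lambda>x. indicator {a..b} x *\<^sub>R (u x * g x)) = (\<lambda>x. (indicator {a..b} x *\<^sub>R u x) * (indicator {a..b} x *\<^sub>R g x))"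
      by (auto simp: indicator_def)
    then show "(\<lambda>x. indicator {a..b} x *\<^sub>R (u x * g x)) \<in> borel_measurable lborel"
      using um gm by simp
  qed
  have int: "set_integrable lborel {a..b} (\<lambda>s. M * g s)" using g by simp
  show ?thesis
  proof (rule set_integrable_bound[OF int meas AE_I2])
    fix x show "x \<in> {a..b} \<longrightarrow> norm (u x * g x) \<le> norm (M * g x)"
    proof
      assume x: "x \<in> {a..b}"
      have "norm (u x * g x) = norm (u x) * norm (g x)" by (simp add: abs_mult)
      also have "\<dots> \<le> M * norm (g x)" using M[OF x] by (simp add: mult_right_mono)
      also have "\<dots> \<le> norm (M * g x)" by (simp add: abs_mult mult_right_mono)
      finally show "norm (u x * g x) \<le> norm (M * g x)" .
    qed
  qed
qed

lemma FTC_LINT: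
  fixes F F' :: "real \<Rightarrow> real"
  assumes ab: "a \<le> b" and d: "\<And>x. x \<in> {a..b} \<Longrightarrow> (F has_real_derivative F' x) (at x within {a..b})"
    and c: "continuous_on {a..b} F'"
  shows "(LINT x:{a..b}|lborel. F' x) = F b - F a"
proof -
  have "(F' has_integral (F b - F a)) {a..b}"
    by (rule fundamental_theorem_of_calculus[OF ab]) (use d in \<open>auto simp: has_real_derivative_iff_has_vector_derivative\<close>)
  moreover have "(LINT x:{a..b}|lborel. F' x) = integral {a..b} F'"
    using set_borel_integral_eq_integral(2)[OF borel_integrable_atLeastAtMost'[OF c]] .
  ultimately show ?thesis by (simp add: integral_unique)
qed

lemma ibp:
  fixes u u' g :: "real \<Rightarrow> real"
  assumes t: "0 \<le> t"
    and du: "\<And>s. s \<in> {0..t} \<Longrightarrow> (u has_real_derivative u' s) (at s within {0..t})"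
    and cu: "continuous_on {0..t} u'"
    and g: "set_integrable lborel {0..t} g"
  shows "(LINT s:{0..t}|lborel. u s * g s) = u t * (LINT r:{0..t}|lborel. g r)
           - (LINT s:{0..t}|lborel. u' s * (LINT r:{0..s}|lborel. g r))"
proof -
  define G where "G r = indicator {0..t} r * g r" for r
  define U where "U s = indicator {0..t} s * u' s" for s
  define Fc where "Fc r s = G r * U s * (if r \<le> s then 1 else 0 :: real)" for r s
  have Gi: "integrable lborel G" using g unfolding set_integrable_def G_def by simp
  have Ui: "integrable lborel U" using borel_integrable_atLeastAtMost'[OF cu]
    unfolding set_integrable_def U_def by simp
  have Gm[measurable]: "G \<in> borel_measurable lborel" using Gi by (rule borel_measurable_integrable)
  have Um[measurable]: "U \<in> borel_measurable lborel" using Ui by (rule borel_measurable_integrable)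
  have Fm: "(\<lambda>(r,s). Fc r s) \<in> borel_measurable (lborel \<Otimes>\<^sub>M lborel)"
    unfolding Fc_def by measurable
  have Hi: "integrable (lborel \<Otimes>\<^sub>M lborel) (\<lambda>(r,s). \<bar>G r\<bar> * \<bar>U s\<bar>)"
  proof (rule lborel_pair.Fubini_integrable)
    show "(\<lambda>(r,s). \<bar>G r\<bar> * \<bar>U s\<bar>) \<in> borel_measurable (lborel \<Otimes>\<^sub>M lborel)" by measurable
    show "integrable lborel (\<lambda>x. LINT y|lborel. norm (case (x, y) of (r, s) \<Rightarrow> \<bar>G r\<bar> * \<bar>U s\<bar>))"
      using Gi by (simp add: abs_mult)
    show "AE x in lborel. integrable lborel (\<lambda>y. case (x, y) of (r, s) \<Rightarrow> \<bar>G r\<bar> * \<bar>U s\<bar>)"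
      using Ui by simp
  qed
  have Fi: "integrable (lborel \<Otimes>\<^sub>M lborel) (\<lambda>(r,s). Fc r s)"
    by (rule Bochner_Integration.integrable_bound[OF Hi Fm]) (auto simp: Fc_def abs_mult)
  have fub: "(LINT s|lborel. LINT r|lborel. Fc r s) = (LINT r|lborel. LINT s|lborel. Fc r s)"
    using lborel_pair.Fubini_integral[OF Fi] .
  have cu0: "continuous_on {0..t} u" using DERIV_continuous_on[OF du] .
  have in1: "(LINT s|lborel. Fc r s) = G r * (u t - u r)" for r
  proof (cases "r \<in> {0..t}")
    case True
    have "(LINT s|lborel. Fc r s) = (LINT s|lborel. G r * (indicator {r..t} s *\<^sub>R u' s))"
      unfolding Fc_def U_def using True
      by (intro Bochner_Integration.integral_cong) (auto simp: indicator_def)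
    also have "\<dots> = G r * (LINT s|lborel. indicator {r..t} s *\<^sub>R u' s)" by simp
    also have "(LINT s|lborel. indicator {r..t} s *\<^sub>R u' s) = u t - u r"
      unfolding set_lebesgue_integral_def[symmetric]
      by (rule FTC_LINT) (use True in \<open>auto intro: DERIV_subset[OF du] continuous_on_subset[OF cu]\<close>)
    finally show ?thesis .
  next
    case False
    then show ?thesis by (simp add: Fc_def G_def)
  qed
  have in2: "(LINT r|lborel. Fc r s) = U s * (LINT r:{0..s}|lborel. g r)" for s
  proof (cases "s \<in> {0..t}")
    case True
    have "(LINT r|lborel. Fc r s) = (LINT r|lborel. U s * (indicator {0..s} r *\<^sub>R g r))"
      unfolding Fc_def G_def using True
      by (intro Bochner_Integration.integral_cong) (auto simp: indicator_def)
    then show ?thesis by (simp add: set_lebesgue_integral_def)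
  next
    case False
    then show ?thesis by (simp add: Fc_def U_def)
  qed
  have ug: "set_integrable lborel {0..t} (\<lambda>s. u s * g s)" by (rule set_integrable_cont_mult[OF cu0 g])
  have "(LINT r|lborel. LINT s|lborel. Fc r s) = (LINT r:{0..t}|lborel. u t * g r - u r * g r)"
    unfolding in1 set_lebesgue_integral_def G_def
    by (auto intro!: Bochner_Integration.integral_cong simp: indicator_def algebra_simps)
  also have "\<dots> = u t * (LINT r:{0..t}|lborel. g r) - (LINT s:{0..t}|lborel. u s * g s)"
    using g ug by (subst set_integral_diff) auto
  finally have A: "(LINT r|lborel. LINT s|lborel. Fc r s) = u t * (LINT r:{0..t}|lborel. g r) - (LINT s:{0..t}|lborel. u s * g s)" .
  have B: "(LINT s|lborel. LINT r|lborel. Fc r s) = (LINT s:{0..t}|lborel. u' s * (LINT r:{0..s}|lborel. g r))"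
    unfolding in2 set_lebesgue_integral_def U_def
    by (auto intro!: Bochner_Integration.integral_cong simp: indicator_def)
  show ?thesis using fub A B by linarith
qed

lemma indef_cont:
  fixes h :: "real \<Rightarrow> real"
  assumes h: "set_integrable lborel {0..t} h"
  shows "continuous_on {0..t} (\<lambda>s. LINT r:{0..s}|lborel. h r)"
proof -
  have hi: "h integrable_on {0..t}" using set_borel_integral_eq_integral(1)[OF h] .
  have "continuous_on {0..t} (\<lambda>s. integral {0..s} h)" by (rule indefinite_integral_continuous_1[OF hi])
  moreover have "(LINT r:{0..s}|lborel. h r) = integral {0..s} h" if "s \<in> {0..t}" for s
    using set_borel_integral_eq_integral(2)[OF set_integrable_subset[OF h]] that by auto
  ultimately show ?thesis using continuous_on_eq by (metis (no_types, lifting))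
qed

lemma toeplitz:
  fixes m w z :: "real \<Rightarrow> real"
  assumes m_pos: "\<And>s. 0 \<le> s \<Longrightarrow> m s > 0"
    and m_mono: "\<And>s t. 0 \<le> s \<Longrightarrow> s \<le> t \<Longrightarrow> m s \<le> m t"
    and m_lim: "filterlim m at_top at_top"
    and w_nn: "\<And>s. 0 \<le> s \<Longrightarrow> w s \<ge> 0"
    and cont: "\<And>t. continuous_on {0..t} (\<lambda>s. m s * w s)"
    and zcont: "\<And>t. continuous_on {0..t} z"
    and bound: "\<And>t. 0 \<le> t \<Longrightarrow> (LINT s:{0..t}|lborel. m s * w s) \<le> B * m t"
    and z_lim: "(z \<longlongrightarrow> 0) at_top"
  shows "((\<lambda>t. (LINT s:{0..t}|lborel. m s * w s * \<bar>z s\<bar>) / m t) \<longlongrightarrow> 0) at_top"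
proof (rule tendstoI)
  fix \<epsilon> :: real assume \<epsilon>: "\<epsilon> > 0"
  define \<delta> where "\<delta> = \<epsilon> / (2 * (\<bar>B\<bar> + 1))"
  have \<delta>: "\<delta> > 0" using \<epsilon> by (simp add: \<delta>_def)
  have "\<forall>\<^sub>F s in at_top. dist (z s) 0 < \<delta>" using tendstoD[OF z_lim \<delta>] .
  then obtain N where N: "\<And>s. s \<ge> N \<Longrightarrow> \<bar>z s\<bar> < \<delta>" by (auto simp: eventually_at_top_linorder)
  define T where "T = max N 0"
  have T: "T \<ge> 0" "\<And>s. s \<ge> T \<Longrightarrow> \<bar>z s\<bar> < \<delta>" using N by (auto simp: T_def)
  define h where "h s = m s * w s * \<bar>z s\<bar>" for s
  have hc: "continuous_on {0..t} h" for t
    unfolding h_def by (intro continuous_intros cont zcont)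
  have hnn: "h s \<ge> 0" if "0 \<le> s" for s unfolding h_def using m_pos[OF that] w_nn[OF that] by simp
  define C where "C = (LINT s:{0..T}|lborel. h s)"
  have "\<forall>\<^sub>F t in at_top. m t > 2 * \<bar>C\<bar> / \<epsilon>"
    using filterlim_at_top_dense m_lim by (simp add: filterlim_at_top_dense)
  moreover have "\<forall>\<^sub>F t in at_top. t \<ge> T" by (rule eventually_ge_at_top)
  ultimately show "\<forall>\<^sub>F t in at_top. dist ((LINT s:{0..t}|lborel. m s * w s * \<bar>z s\<bar>) / m t) 0 < \<epsilon>"
  proof eventually_elim
    case (elim t)
    have t0: "0 \<le> t" using elim T by linarith
    have mt: "m t > 0" using m_pos[OF t0] .
    have i1: "set_integrable lborel {0..t} h" by (rule borel_integrable_atLeastAtMost'[OF hc])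
    have i2: "set_integrable lborel {0..t} (\<lambda>s. m s * w s)" by (rule borel_integrable_atLeastAtMost'[OF cont])
    have eqf: "(\<lambda>s. indicator {0..t} s *\<^sub>R (indicator {0..T} s * h s)) = (\<lambda>s. indicator {0..T} s *\<^sub>R h s)"
      using elim by (auto simp: indicator_def)
    have i3: "set_integrable lborel {0..t} (\<lambda>s. indicator {0..T} s * h s)"
      unfolding set_integrable_def eqf using borel_integrable_atLeastAtMost'[OF hc[of T]]
      unfolding set_integrable_def .
    have i4: "set_integrable lborel {0..t} (\<lambda>s. \<delta> * (m s * w s) + indicator {0..T} s * h s)"
      using i2 i3 by (intro set_integral_add) auto
    have C_eq: "(LINT s:{0..t}|lborel. indicator {0..T} s * h s) = C"
      unfolding C_def set_lebesgue_integral_def eqf ..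
    have "(LINT s:{0..t}|lborel. h s) \<le> (LINT s:{0..t}|lborel. \<delta> * (m s * w s) + indicator {0..T} s * h s)"
    proof (rule set_integral_mono[OF i1 i4])
      fix s assume s: "s \<in> {0..t}"
      show "h s \<le> \<delta> * (m s * w s) + indicator {0..T} s * h s"
      proof (cases "s \<le> T")
        case True
        have "0 \<le> \<delta> * (m s * w s)" using s \<delta> m_pos[of s] w_nn[of s] by simp
        then show ?thesis using True s by (simp add: indicator_def)
      next
        case False
        then have "\<bar>z s\<bar> \<le> \<delta>" using T(2)[of s] by simp
        moreover have "0 \<le> m s * w s" using m_pos[of s] w_nn[of s] s by simp
        ultimately have "m s * w s * \<bar>z s\<bar> \<le> m s * w s * \<delta>" by (rule mult_left_mono)
        then have "h s \<le> m s * w s * \<delta>" unfolding h_def .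
        then show ?thesis using False by (simp add: indicator_def mult.commute)
      qed
    qed
    also have "\<dots> = \<delta> * (LINT s:{0..t}|lborel. m s * w s) + C"
      using i2 i3 C_eq by (subst set_integral_add) auto
    also have "\<dots> \<le> \<delta> * (\<bar>B\<bar> * m t) + C"
    proof -
      have "(LINT s:{0..t}|lborel. m s * w s) \<le> \<bar>B\<bar> * m t"
      proof -
        have "B * m t \<le> \<bar>B\<bar> * m t" using mt by (intro mult_right_mono) auto
        then show ?thesis using bound[OF t0] by linarith
      qed
      then show ?thesis using \<delta> by (simp add: mult_left_mono)
    qed
    finally have up: "(LINT s:{0..t}|lborel. h s) \<le> \<delta> * (\<bar>B\<bar> * m t) + C" .
    have lo: "(LINT s:{0..t}|lborel. h s) \<ge> 0"
      unfolding set_lebesgue_integral_def by (rule Bochner_Integration.integral_nonneg) (auto simp: indicator_def hnn)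
    have "\<delta> * \<bar>B\<bar> < \<epsilon> / 2" using \<epsilon> unfolding \<delta>_def by (simp add: field_simps)
    moreover have "C / m t < \<epsilon> / 2"
    proof -
      have "2 * \<bar>C\<bar> < m t * \<epsilon>" using elim(1) \<epsilon> by (simp add: pos_divide_less_eq)
      then have "C < \<epsilon> / 2 * m t" by (simp add: algebra_simps)
      then show ?thesis using mt by (simp add: pos_divide_less_eq)
    qed
    moreover have "(LINT s:{0..t}|lborel. h s) / m t \<le> (\<delta> * (\<bar>B\<bar> * m t) + C) / m t"
      using up mt by (simp add: divide_right_mono)
    moreover have "(\<delta> * (\<bar>B\<bar> * m t) + C) / m t = \<delta> * \<bar>B\<bar> + C / m t"
      using mt by (simp add: field_simps)
    ultimately have "(LINT s:{0..t}|lborel. h s) / m t < \<epsilon>" by linarith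
    then show ?case using lo mt unfolding h_def by (simp add: dist_real_def)
  qed
qed



theorem mainTheorem9:
  fixes \<omega> :: real and p p' f x x' :: "real \<Rightarrow> real"
  assumes omega_pos: "\<omega> > 0"
    and p_deriv: "\<And>t. t \<ge> 0 \<Longrightarrow> (p has_real_derivative p' t) (at t within {0..})"
    and p'_cont: "continuous_on {0..} p'"
    and p_pos: "\<And>t. t \<ge> 0 \<Longrightarrow> p t > 0"
    and p'_neg: "\<And>t. t \<ge> 0 \<Longrightarrow> p' t < 0"
    and p_int_div: "filterlim (\<lambda>T. LINT t:{0..T}|lborel. p t) at_top at_top"
    and p_sq_int: "set_integrable lborel {0..} (\<lambda>t. (p t)^2)"
    and f_loc: "\<And>T. T \<ge> 0 \<Longrightarrow> set_integrable lborel {0..T} f"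
    and x_deriv: "\<And>t. t \<ge> 0 \<Longrightarrow> (x has_real_derivative x' t) (at t within {0..})"
    and x'_int: "\<And>t. t \<ge> 0 \<Longrightarrow>
       set_integrable lborel {0..t} (\<lambda>s. f s - p s * x' s - \<omega>^2 * x s)"
    and x_ode: "\<And>t. t \<ge> 0 \<Longrightarrow>
       x' t = x' 0 + (LINT s:{0..t}|lborel. f s - p s * x' s - \<omega>^2 * x s)"
    and x0: "x 0 = 0" and x'0: "x' 0 = 0"
    and y1_lim: "(y1 \<omega> f \<longlongrightarrow> 0) at_top"
    and x_lim: "(x \<longlongrightarrow> 0) at_top"
  shows "(x' \<longlongrightarrow> 0) at_top \<longleftrightarrow>
         ((\<lambda>t. LINT s:{0..t}|lborel. E p t s * L2 \<omega> t s * y1 \<omega> f s) \<longlongrightarrow> 0) at_top"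
proof -
  have empty: "{0..t} = ({}::real set)" if "t < 0" for t :: real using that by auto
  have p_cont: "continuous_on {0..} p" by (rule DERIV_continuous_on) (use p_deriv in auto)
  have x_cont: "continuous_on {0..} x" by (rule DERIV_continuous_on) (use x_deriv in auto)
  have pc: "continuous_on {0..t} p" for t by (rule continuous_on_subset[OF p_cont]) auto
  have p'c: "continuous_on {0..t} p'" for t by (rule continuous_on_subset[OF p'_cont]) auto
  have xc: "continuous_on {0..t} x" for t by (rule continuous_on_subset[OF x_cont]) auto
  have pd: "(p has_real_derivative p' s) (at s within {0..t})" if "s \<in> {0..t}" for s t
    using DERIV_subset[OF p_deriv] that by auto
  have xd: "(x has_real_derivative x' s) (at s within {0..t})" if "s \<in> {0..t}" for s t
    using DERIV_subset[OF x_deriv] that by auto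
  define g where "g s = f s - p s * x' s - \<omega>^2 * x s" for s
  have gi: "set_integrable lborel {0..t} g" for t
  proof (cases "t \<ge> 0")
    case True
    have "g = (\<lambda>s. f s - p s * x' s - \<omega>^2 * x s)" by (simp add: g_def fun_eq_iff)
    then show ?thesis using x'_int[OF True] by simp
  next
    case False then show ?thesis by (simp add: empty)
  qed
  have x'_eq: "x' s = (LINT r:{0..s}|lborel. g r)" if "s \<ge> 0" for s
    using x_ode[OF that] x'0 unfolding g_def by simp
  have x'c: "continuous_on {0..t} x'" for t
  proof (cases "t \<ge> 0")
    case True
    show ?thesis using indef_cont[OF gi[of t]] x'_eq continuous_on_eq
      by (smt (verit, best) atLeastAtMost_iff)
  next
    case False then show ?thesis by (simp add: empty)
  qed
  have fi: "set_integrable lborel {0..t} f" for t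
  proof (cases "t \<ge> 0")
    case True then show ?thesis using f_loc by simp
  next
    case False then show ?thesis by (simp add: empty)
  qed
  define g2 where "g2 r = exp (\<omega>^2 * r) * f r" for r
  have g2i: "set_integrable lborel {0..t} g2" for t
    unfolding g2_def by (rule set_integrable_cont_mult[OF _ fi]) (intro continuous_intros)
  have y1_eq: "y1 \<omega> f s = exp (- (\<omega>^2) * s) * (LINT r:{0..s}|lborel. g2 r)" for s
  proof -
    have "y1 \<omega> f s = (LINT r:{0..s}|lborel. exp (- (\<omega>^2) * s) * g2 r)"
      unfolding y1_def g2_def
      by (rule set_lebesgue_integral_cong) (auto simp: exp_add[symmetric] algebra_simps)
    then show ?thesis by simp
  qed
  have yc: "continuous_on {0..t} (y1 \<omega> f)" for t
    unfolding y1_eq by (intro continuous_intros indef_cont g2i)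
  define P where "P s = integral {0..s} p" for s
  have Pd: "(P has_real_derivative p s) (at s within {0..t})" if "s \<in> {0..t}" for s t
    unfolding P_def by (rule integral_has_real_derivative[OF pc that])
  have P_diff: "(LINT \<tau>:{s..t}|lborel. p \<tau>) = P t - P s" if "0 \<le> s" "s \<le> t" for s t
  proof -
    have "(LINT \<tau>:{s..t}|lborel. p \<tau>) = integral {s..t} p"
      by (rule set_borel_integral_eq_integral(2)[OF borel_integrable_atLeastAtMost'])
         (rule continuous_on_subset[OF p_cont], use that in auto)
    also have "\<dots> = P t - P s"
      unfolding P_def using Henstock_Kurzweil_Integration.integral_combine[OF that(1) that(2) integrable_continuous_interval[OF pc[of t]]]
      by simp
    finally show ?thesis .
  qed
  have P_LINT: "(LINT \<tau>:{0..s}|lborel. p \<tau>) = P s" if "0 \<le> s" for s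
    using P_diff[OF order_refl that] by (simp add: P_def)
  define m where "m s = exp (P s / 2)" for s
  have m_pos: "m s > 0" for s unfolding m_def by simp
  have md: "(m has_real_derivative m s * (p s / 2)) (at s within {0..t})" if "s \<in> {0..t}" for s t
    unfolding m_def using Pd[OF that] by (auto intro!: derivative_eq_intros)
  have mc: "continuous_on {0..t} m" for t by (rule DERIV_continuous_on[OF md])
  have E_eq: "E p t s = m s / m t" if "0 \<le> s" "s \<le> t" for s t
  proof -
    have "- (1/2) * (P t - P s) = P s / 2 - P t / 2" by (simp add: field_simps)
    then show ?thesis unfolding E_def m_def P_diff[OF that] by (simp add: exp_diff)
  qed
  have m_mono: "m s \<le> m t" if "0 \<le> s" "s \<le> t" for s t
  proof -
    have "0 \<le> (LINT \<tau>:{s..t}|lborel. p \<tau>)"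
      unfolding set_lebesgue_integral_def
      by (rule Bochner_Integration.integral_nonneg) (use p_pos that in \<open>auto simp: indicator_def less_imp_le\<close>)
    then have "P s \<le> P t" using P_diff[OF that] by linarith
    then show ?thesis unfolding m_def by simp
  qed
  have m_lim: "filterlim m at_top at_top"
  proof -
    have ev: "\<forall>\<^sub>F T in at_top. (LINT t:{0..T}|lborel. p t) = P T"
      using eventually_ge_at_top[of "0::real"] by (rule eventually_mono) (simp add: P_LINT)
    have PL: "filterlim P at_top at_top" using filterlim_cong[OF refl refl ev] p_int_div by simp
    have "filterlim (\<lambda>s. 1/2 * P s) at_top at_top"
      by (rule filterlim_tendsto_pos_mult_at_top[OF tendsto_const _ PL]) simp
    then have "filterlim (\<lambda>s. exp (1/2 * P s)) at_top at_top"
      by (rule filterlim_compose[OF exp_at_top])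
    moreover have "m = (\<lambda>s. exp (1/2 * P s))" by (simp add: m_def fun_eq_iff)
    ultimately show ?thesis by simp
  qed
  have p_le: "p s \<le> p 0" if "0 \<le> s" for s
  proof -
    have "(LINT r:{0..s}|lborel. p' r) = p s - p 0"
      by (rule FTC_LINT[OF that pd p'c])
    moreover have "(LINT r:{0..s}|lborel. p' r) \<le> (LINT r:{0..s}|lborel. 0)"
      by (rule set_integral_mono[OF borel_integrable_atLeastAtMost'[OF p'c]]) (use p'_neg in \<open>auto simp: less_imp_le set_integrable_def\<close>)
    ultimately show ?thesis by simp
  qed
  define q where "q s = (p s)^2 / 4 + p' s / 2" for s
  have qc: "continuous_on {0..t} q" for t unfolding q_def by (intro continuous_intros pc p'c) auto
  define \<Phi> where "\<Phi> t = (LINT s:{0..t}|lborel. E p t s * L2 \<omega> t s * y1 \<omega> f s)" for t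
  define \<rho> where "\<rho> t s = - (m s * (p s / 2) * cos (\<omega> * (t - s)) * y1 \<omega> f s)
       + m s * cos (\<omega> * (t - s)) * q s * x s" for t s
  have key: "m t * (x' t - \<Phi> t) = m t * y1 \<omega> f t - m t * p t * x t / 2 + (LINT s:{0..t}|lborel. \<rho> t s)"
    if t0: "0 \<le> t" for t
  proof -
    define I where "I = {0..t}"
    define k where "k s = m s * cos (\<omega> * (t - s))" for s
    define k' where "k' s = m s * (p s / 2) * cos (\<omega> * (t - s)) + m s * \<omega> * sin (\<omega> * (t - s))" for s
    have kd: "(k has_real_derivative k' s) (at s within I)" if "s \<in> I" for s
      unfolding k_def k'_def I_def using md[OF that[unfolded I_def]]
      by (auto intro!: derivative_eq_intros simp: algebra_simps)
    have kc: "continuous_on I k" unfolding k_def I_def by (intro continuous_intros mc)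
    have k'c: "continuous_on I k'" unfolding k'_def I_def by (auto intro!: continuous_intros mc pc)
    have eq1: "(LINT s:I|lborel. k s * g s) = m t * x' t - (LINT s:I|lborel. k' s * x' s)"
    proof -
      have "(LINT s:I|lborel. k s * g s) = k t * (LINT r:I|lborel. g r) - (LINT s:I|lborel. k' s * (LINT r:{0..s}|lborel. g r))"
        unfolding I_def by (rule ibp[OF t0 kd[unfolded I_def] k'c[unfolded I_def] gi])
      also have "(LINT s:I|lborel. k' s * (LINT r:{0..s}|lborel. g r)) = (LINT s:I|lborel. k' s * x' s)"
        by (rule set_lebesgue_integral_cong) (auto simp: I_def x'_eq)
      finally show ?thesis using x'_eq[OF t0] by (simp add: k_def I_def)
    qed
    define B where "B s = m s * cos (\<omega> * (t - s)) * p s * x s / 2 - \<omega> * m s * sin (\<omega> * (t - s)) * x s" for s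
    define B' where "B' s = m s * (p s / 2) * cos (\<omega> * (t - s)) * p s * x s / 2
        + m s * (\<omega> * sin (\<omega> * (t - s))) * p s * x s / 2
        + m s * cos (\<omega> * (t - s)) * p' s * x s / 2 + m s * cos (\<omega> * (t - s)) * p s * x' s / 2
        - \<omega> * (m s * (p s / 2) * sin (\<omega> * (t - s)) * x s - m s * (\<omega> * cos (\<omega> * (t - s))) * x s
               + m s * sin (\<omega> * (t - s)) * x' s)" for s
    have Bd: "(B has_real_derivative B' s) (at s within I)" if "s \<in> I" for s
      unfolding B_def B'_def using md[OF that[unfolded I_def]] pd[OF that[unfolded I_def]] xd[OF that[unfolded I_def]]
      unfolding I_def
      by (auto intro!: derivative_eq_intros simp: algebra_simps)
    have B'c: "continuous_on I B'" unfolding B'_def I_def by (auto intro!: continuous_intros mc pc p'c xc x'c)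
    have eq2: "(LINT s:I|lborel. B' s) = m t * p t * x t / 2"
      unfolding I_def by (subst FTC_LINT[OF t0 Bd[unfolded I_def] B'c[unfolded I_def]]) (simp_all add: B_def x0)
    have pw1: "k s * g s + (k' s * x' s + B' s) = k s * (f s + q s * x s)" for s
      unfolding k_def k'_def B'_def g_def q_def by (simp add: algebra_simps power2_eq_square)
    have ikg: "set_integrable lborel I (\<lambda>s. k s * g s)"
      unfolding I_def by (rule set_integrable_cont_mult[OF kc[unfolded I_def] gi])
    have ik'x': "set_integrable lborel I (\<lambda>s. k' s * x' s)"
      unfolding I_def by (rule borel_integrable_atLeastAtMost') (intro continuous_intros k'c[unfolded I_def] x'c)
    have iB': "set_integrable lborel I B'"
      unfolding I_def by (rule borel_integrable_atLeastAtMost'[OF B'c[unfolded I_def]])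
    have eq3: "(LINT s:I|lborel. k s * (f s + q s * x s)) = m t * x' t + m t * p t * x t / 2"
    proof -
      have "(LINT s:I|lborel. k s * (f s + q s * x s)) = (LINT s:I|lborel. k s * g s + (k' s * x' s + B' s))"
        by (simp add: pw1)
      also have "\<dots> = (LINT s:I|lborel. k s * g s) + ((LINT s:I|lborel. k' s * x' s) + (LINT s:I|lborel. B' s))"
        using ikg ik'x' iB' by (simp add: set_integral_add)
      finally show ?thesis using eq1 eq2 by simp
    qed
    define u where "u s = k s * exp (- (\<omega>^2) * s)" for s
    define u' where "u' s = (k' s - \<omega>^2 * k s) * exp (- (\<omega>^2) * s)" for s
    have ud: "(u has_real_derivative u' s) (at s within I)" if "s \<in> I" for s
      unfolding u_def u'_def using kd[OF that]
      by (auto intro!: derivative_eq_intros simp: algebra_simps)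
    have u'c: "continuous_on I u'" unfolding u'_def by (auto intro!: continuous_intros k'c kc)
    have eq4: "(LINT s:I|lborel. k s * f s) = m t * y1 \<omega> f t - (LINT s:I|lborel. (k' s - \<omega>^2 * k s) * y1 \<omega> f s)"
    proof -
      have "(LINT s:I|lborel. u s * g2 s) = u t * (LINT r:I|lborel. g2 r) - (LINT s:I|lborel. u' s * (LINT r:{0..s}|lborel. g2 r))"
        unfolding I_def by (rule ibp[OF t0 ud[unfolded I_def] u'c[unfolded I_def] g2i])
      moreover have "(LINT s:I|lborel. u s * g2 s) = (LINT s:I|lborel. k s * f s)"
        unfolding u_def g2_def by (rule set_lebesgue_integral_cong) (auto simp: exp_minus field_simps I_def)
      moreover have "(LINT s:I|lborel. u' s * (LINT r:{0..s}|lborel. g2 r)) = (LINT s:I|lborel. (k' s - \<omega>^2 * k s) * y1 \<omega> f s)"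
        unfolding u'_def y1_eq by (rule set_lebesgue_integral_cong) (auto simp: I_def)
      moreover have "u t * (LINT r:I|lborel. g2 r) = m t * y1 \<omega> f t"
        unfolding u_def y1_eq k_def I_def by simp
      ultimately show ?thesis by simp
    qed
    have ikf: "set_integrable lborel I (\<lambda>s. k s * f s)"
      unfolding I_def by (rule set_integrable_cont_mult[OF kc[unfolded I_def] fi])
    have ikqx: "set_integrable lborel I (\<lambda>s. k s * (q s * x s))"
      unfolding I_def by (rule borel_integrable_atLeastAtMost') (auto intro!: continuous_intros kc[unfolded I_def] qc xc)
    have eq5: "(LINT s:I|lborel. k s * (f s + q s * x s)) = (LINT s:I|lborel. k s * f s) + (LINT s:I|lborel. k s * (q s * x s))"
      using ikf ikqx by (simp add: set_integral_add distrib_left)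
    have eq6: "m t * \<Phi> t = (LINT s:I|lborel. m s * L2 \<omega> t s * y1 \<omega> f s)"
    proof -
      have "\<Phi> t = (LINT s:I|lborel. (1 / m t) * (m s * L2 \<omega> t s * y1 \<omega> f s))"
        unfolding \<Phi>_def I_def by (rule set_lebesgue_integral_cong) (auto simp: E_eq)
      also have "\<dots> = (1 / m t) * (LINT s:I|lborel. m s * L2 \<omega> t s * y1 \<omega> f s)" by simp
      finally show ?thesis using m_pos[of t] by simp
    qed
    have i7: "set_integrable lborel I (\<lambda>s. (k' s - \<omega>^2 * k s) * y1 \<omega> f s)"
      unfolding I_def by (rule borel_integrable_atLeastAtMost') (auto intro!: continuous_intros kc[unfolded I_def] k'c[unfolded I_def] yc)
    have i8: "set_integrable lborel I (\<lambda>s. m s * L2 \<omega> t s * y1 \<omega> f s)"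
      unfolding I_def L2_def by (rule borel_integrable_atLeastAtMost') (auto intro!: continuous_intros mc yc)
    have i9: "set_integrable lborel I (\<rho> t)"
      unfolding I_def \<rho>_def by (rule borel_integrable_atLeastAtMost') (auto intro!: continuous_intros mc yc pc qc xc)
    have pw2: "- ((k' s - \<omega>^2 * k s) * y1 \<omega> f s) + k s * (q s * x s) = m s * L2 \<omega> t s * y1 \<omega> f s + \<rho> t s" for s
      unfolding k_def k'_def L2_def \<rho>_def by (simp add: algebra_simps)
    have eq7: "- (LINT s:I|lborel. (k' s - \<omega>^2 * k s) * y1 \<omega> f s) + (LINT s:I|lborel. k s * (q s * x s))
        = (LINT s:I|lborel. m s * L2 \<omega> t s * y1 \<omega> f s) + (LINT s:I|lborel. \<rho> t s)"
    proof -
      have "- (LINT s:I|lborel. (k' s - \<omega>^2 * k s) * y1 \<omega> f s) + (LINT s:I|lborel. k s * (q s * x s))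
          = (LINT s:I|lborel. - ((k' s - \<omega>^2 * k s) * y1 \<omega> f s) + k s * (q s * x s))"
        using i7 ikqx by (simp add: set_integral_add set_integral_uminus)
      also have "\<dots> = (LINT s:I|lborel. m s * L2 \<omega> t s * y1 \<omega> f s + \<rho> t s)" by (simp only: pw2)
      also have "\<dots> = (LINT s:I|lborel. m s * L2 \<omega> t s * y1 \<omega> f s) + (LINT s:I|lborel. \<rho> t s)"
        using i8 i9 by (simp add: set_integral_add)
      finally show ?thesis .
    qed
    show ?thesis using eq3 eq4 eq5 eq6 eq7 unfolding I_def by (simp add: algebra_simps)
  qed
  have T1: "((\<lambda>t. (LINT s:{0..t}|lborel. m s * (p s / 2) * \<bar>y1 \<omega> f s\<bar>) / m t) \<longlongrightarrow> 0) at_top"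
  proof (rule toeplitz[where B=1])
    show "continuous_on {0..t} (\<lambda>s. m s * (p s / 2))" for t by (auto intro!: continuous_intros mc pc)
    show "(LINT s:{0..t}|lborel. m s * (p s / 2)) \<le> 1 * m t" if "0 \<le> t" for t
      using FTC_LINT[OF that md \<open>continuous_on {0..t} (\<lambda>s. m s * (p s / 2))\<close>] m_pos[of 0] by simp
  qed (use m_pos m_mono m_lim yc y1_lim p_pos in \<open>auto simp: less_imp_le\<close>)
  define Ip where "Ip = (LINT s:{0..}|lborel. (p s)^2)"
  define Q where "Q = Ip / 4 + p 0 / 2"
  have T2: "((\<lambda>t. (LINT s:{0..t}|lborel. m s * \<bar>q s\<bar> * \<bar>x s\<bar>) / m t) \<longlongrightarrow> 0) at_top"
  proof (rule toeplitz[where B=Q])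
    show "continuous_on {0..t} (\<lambda>s. m s * \<bar>q s\<bar>)" for t by (auto intro!: continuous_intros mc qc)
    show "(LINT s:{0..t}|lborel. m s * \<bar>q s\<bar>) \<le> Q * m t" if t0: "0 \<le> t" for t
    proof -
      have ip2: "set_integrable lborel {0..t} (\<lambda>s. (p s)^2)"
        by (rule borel_integrable_atLeastAtMost') (auto intro!: continuous_intros pc)
      have ip': "set_integrable lborel {0..t} p'" by (rule borel_integrable_atLeastAtMost'[OF p'c])
      have iq: "set_integrable lborel {0..t} (\<lambda>s. (p s)^2 / 4 - p' s / 2)"
        using ip2 ip' by (intro set_integral_diff) auto
      have "(LINT s:{0..t}|lborel. m s * \<bar>q s\<bar>) \<le> (LINT s:{0..t}|lborel. m t * ((p s)^2 / 4 - p' s / 2))"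
      proof (rule set_integral_mono)
        show "set_integrable lborel {0..t} (\<lambda>s. m s * \<bar>q s\<bar>)"
          by (rule borel_integrable_atLeastAtMost') (auto intro!: continuous_intros mc qc)
        show "set_integrable lborel {0..t} (\<lambda>s. m t * ((p s)^2 / 4 - p' s / 2))" using iq by simp
        fix s assume s: "s \<in> {0..t}"
        have "\<bar>q s\<bar> \<le> (p s)^2 / 4 - p' s / 2"
        proof -
          have "0 \<le> (p s)^2" by simp
          then show ?thesis unfolding q_def using p'_neg[of s] s by (simp add: abs_le_iff)
        qed
        moreover have "m s \<le> m t" using m_mono s by auto
        moreover have "0 \<le> \<bar>q s\<bar>" by simp
        ultimately show "m s * \<bar>q s\<bar> \<le> m t * ((p s)^2 / 4 - p' s / 2)"
          using m_pos[of s] by (meson less_imp_le mult_mono order_trans abs_ge_zero)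
      qed
      also have "\<dots> = m t * ((LINT s:{0..t}|lborel. (p s)^2) / 4 - (LINT s:{0..t}|lborel. p' s) / 2)"
        using ip2 ip' by (simp add: set_integral_diff)
      also have "(LINT s:{0..t}|lborel. p' s) = p t - p 0" by (rule FTC_LINT[OF t0 pd p'c])
      also have "(LINT s:{0..t}|lborel. (p s)^2) \<le> Ip"
        unfolding Ip_def set_lebesgue_integral_def
      proof (rule Bochner_Integration.integral_mono)
        show "integrable lborel (\<lambda>s. indicator {0..t} s *\<^sub>R (p s)^2)" using ip2 unfolding set_integrable_def .
        show "integrable lborel (\<lambda>s. indicator {0..} s *\<^sub>R (p s)^2)" using p_sq_int unfolding set_integrable_def .
      qed (auto simp: indicator_def)
      then have "m t * ((LINT s:{0..t}|lborel. (p s)^2) / 4 - (p t - p 0) / 2) \<le> Q * m t"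
      proof -
        assume J: "(LINT s:{0..t}|lborel. (p s)^2) \<le> Ip"
        have "(LINT s:{0..t}|lborel. (p s)^2) / 4 - (p t - p 0) / 2 \<le> Q"
        proof -
          have gen: "JJ / 4 - (p t - p 0) / 2 \<le> Q" if "JJ \<le> Ip" for JJ
            using that p_pos[OF t0] unfolding Q_def by (simp add: field_simps)
          show ?thesis by (rule gen[OF J])
        qed
        then have "m t * ((LINT s:{0..t}|lborel. (p s)^2) / 4 - (p t - p 0) / 2) \<le> m t * Q"
          using m_pos[of t] by (intro mult_left_mono) auto
        then show ?thesis by (simp add: mult.commute)
      qed
      finally show ?thesis .
    qed
  qed (use m_pos m_mono m_lim xc x_lim in \<open>auto\<close>)
  define T1f where "T1f t = (LINT s:{0..t}|lborel. m s * (p s / 2) * \<bar>y1 \<omega> f s\<bar>) / m t" for t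
  define T2f where "T2f t = (LINT s:{0..t}|lborel. m s * \<bar>q s\<bar> * \<bar>x s\<bar>) / m t" for t
  have bnd: "\<bar>x' t - \<Phi> t\<bar> \<le> \<bar>y1 \<omega> f t\<bar> + p 0 * \<bar>x t\<bar> / 2 + T1f t + T2f t" if t0: "0 \<le> t" for t
  proof -
    define b where "b s = m s * (p s / 2) * \<bar>y1 \<omega> f s\<bar> + m s * \<bar>q s\<bar> * \<bar>x s\<bar>" for s
    have ib1: "set_integrable lborel {0..t} (\<lambda>s. m s * (p s / 2) * \<bar>y1 \<omega> f s\<bar>)"
      by (rule borel_integrable_atLeastAtMost') (auto intro!: continuous_intros mc pc yc)
    have ib2: "set_integrable lborel {0..t} (\<lambda>s. m s * \<bar>q s\<bar> * \<bar>x s\<bar>)"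
      by (rule borel_integrable_atLeastAtMost') (auto intro!: continuous_intros mc qc xc)
    have ib: "set_integrable lborel {0..t} b" unfolding b_def using ib1 ib2 by (rule set_integral_add)
    have ir: "set_integrable lborel {0..t} (\<rho> t)"
      unfolding \<rho>_def by (rule borel_integrable_atLeastAtMost') (auto intro!: continuous_intros mc yc pc qc xc)
    have irm: "set_integrable lborel {0..t} (\<lambda>s. - \<rho> t s)" using ir by (rule set_integrable_mult_right[where a="-1", simplified])
    have rb: "\<bar>\<rho> t s\<bar> \<le> b s" if s: "s \<in> {0..t}" for s
    proof -
      have c1: "\<bar>cos (\<omega> * (t - s))\<bar> \<le> 1" by simp
      have gabs: "\<bar>A * B * C\<bar> = A * (\<bar>B\<bar> * \<bar>C\<bar>)" if "0 \<le> A" for A B C :: real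
        using that by (simp add: abs_mult)
      have a0: "0 \<le> m s * (p s / 2)" using m_pos[of s] p_pos[of s] s by simp
      have m0: "0 \<le> m s" using m_pos[of s] by simp
      have "\<bar>\<rho> t s\<bar> \<le> \<bar>m s * (p s / 2) * cos (\<omega> * (t - s)) * y1 \<omega> f s\<bar> + \<bar>m s * cos (\<omega> * (t - s)) * q s * x s\<bar>"
        unfolding \<rho>_def by (metis abs_minus_cancel abs_triangle_ineq)
      also have "\<bar>m s * (p s / 2) * cos (\<omega> * (t - s)) * y1 \<omega> f s\<bar> = (m s * (p s / 2)) * (\<bar>cos (\<omega> * (t - s))\<bar> * \<bar>y1 \<omega> f s\<bar>)"
        using gabs[OF a0] .
      also have "\<dots> \<le> (m s * (p s / 2)) * \<bar>y1 \<omega> f s\<bar>"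
        using a0 c1 by (intro mult_left_mono) (auto intro: mult_left_le_one_le)
      also have "\<bar>m s * cos (\<omega> * (t - s)) * q s * x s\<bar> = m s * (\<bar>cos (\<omega> * (t - s))\<bar> * (\<bar>q s\<bar> * \<bar>x s\<bar>))"
        using gabs[OF m0, of "cos (\<omega> * (t - s))" "q s * x s"] by (simp add: mult.assoc abs_mult)
      also have "\<dots> \<le> m s * (\<bar>q s\<bar> * \<bar>x s\<bar>)"
        using m0 c1 by (intro mult_left_mono) (auto intro: mult_left_le_one_le)
      finally show ?thesis unfolding b_def by (simp add: mult.assoc)
    qed
    have "(LINT s:{0..t}|lborel. \<rho> t s) \<le> (LINT s:{0..t}|lborel. b s)"
      by (rule set_integral_mono[OF ir ib]) (use rb in \<open>auto simp: abs_le_iff\<close>)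
    moreover have "(LINT s:{0..t}|lborel. - \<rho> t s) \<le> (LINT s:{0..t}|lborel. b s)"
      by (rule set_integral_mono[OF irm ib]) (use rb in \<open>auto simp: abs_le_iff\<close>)
    ultimately have rI: "\<bar>LINT s:{0..t}|lborel. \<rho> t s\<bar> \<le> (LINT s:{0..t}|lborel. b s)"
      by (simp add: set_integral_uminus[OF ir] abs_le_iff)
    have bI: "(LINT s:{0..t}|lborel. b s) / m t = T1f t + T2f t"
      unfolding b_def T1f_def T2f_def using ib1 ib2 by (simp add: set_integral_add add_divide_distrib)
    have mt: "m t > 0" by (rule m_pos)
    have eqd: "x' t - \<Phi> t = y1 \<omega> f t - p t * x t / 2 + (LINT s:{0..t}|lborel. \<rho> t s) / m t"
      using key[OF t0] mt by (simp add: field_simps)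
    have "\<bar>x' t - \<Phi> t\<bar> \<le> \<bar>y1 \<omega> f t\<bar> + \<bar>p t * x t / 2\<bar> + \<bar>(LINT s:{0..t}|lborel. \<rho> t s) / m t\<bar>"
      unfolding eqd by (smt (verit))
    also have "\<bar>p t * x t / 2\<bar> \<le> p 0 * \<bar>x t\<bar> / 2"
      using p_le[OF t0] p_pos[OF t0] by (simp add: abs_mult mult_right_mono)
    also have "\<bar>(LINT s:{0..t}|lborel. \<rho> t s) / m t\<bar> \<le> T1f t + T2f t"
      unfolding bI[symmetric] using rI mt by (simp add: divide_right_mono)
    finally show ?thesis by simp
  qed
  have lim0: "((\<lambda>t. \<bar>y1 \<omega> f t\<bar> + p 0 * \<bar>x t\<bar> / 2 + T1f t + T2f t) \<longlongrightarrow> 0) at_top"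
  proof -
    have T1': "(T1f \<longlongrightarrow> 0) at_top" using T1 unfolding T1f_def .
    have T2': "(T2f \<longlongrightarrow> 0) at_top" using T2 unfolding T2f_def .
    have "((\<lambda>t. \<bar>y1 \<omega> f t\<bar> + p 0 * \<bar>x t\<bar> / 2 + T1f t + T2f t) \<longlongrightarrow> \<bar>0\<bar> + p 0 * \<bar>0\<bar> / 2 + 0 + 0) at_top"
      by (intro tendsto_intros y1_lim x_lim T1' T2') simp
    then show ?thesis by simp
  qed
  have lim: "((\<lambda>t. x' t - \<Phi> t) \<longlongrightarrow> 0) at_top"
    by (rule Lim_null_comparison[OF eventually_mono[OF eventually_ge_at_top[of 0]] lim0])
       (use bnd in auto)
  have PhiE: "(\<lambda>t. LINT s:{0..t}|lborel. E p t s * L2 \<omega> t s * y1 \<omega> f s) = \<Phi>"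
    by (simp add: \<Phi>_def fun_eq_iff)
  show ?thesis unfolding PhiE
  proof
    assume "(x' \<longlongrightarrow> 0) at_top"
    from tendsto_diff[OF this lim] show "(\<Phi> \<longlongrightarrow> 0) at_top" by simp
  next
    assume "(\<Phi> \<longlongrightarrow> 0) at_top"
    from tendsto_add[OF this lim] show "(x' \<longlongrightarrow> 0) at_top" by simp
  qed
qed
end
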